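(* Let $(w_t)_{t\in\mathbb{N}_0}$ be mutually independent $\mathbb{R}^d$-valued random vectors (not necessarily identically distributed) with $\mathsf{E}[w_t]=0$, $\mathsf{E}[w_tw_t^{\mathrm T}]=Q_t$, and $\mathsf{E}[\|w_t\|^4]\le C_4$ for all $t$, for some $C_4>0$. Let $C_1:=\sup_t\mathsf{E}[\|w_t\|]$. For $r>0$ consider the closed-loop system $$x_{t+1}=x_t-\operatorname{sat}_r(x_t)+w_t,\qquad x_0=x,\quad t\in\mathbb{N}_0.$$ Then for every $r>C_1$ and every $x\in\mathbb{R}^d$ there exists $c<\infty$ such that $\sup_{t\in\mathbb{N}_0}\mathsf{E}_x[\|x_t\|^2]\le c$.
   Context: For $r>0$, $\operatorname{sat}_r:\mathbb{R}^d\to\{y:\|y\|\le r\}$ is defined by $\operatorname{sat}_r(y)=y$ if $\|y\|\le r$ and $\operatorname{sat}_r(y)=ry/\|y\|$ otherwise. $\|\cdot\|$ is the Euclidean norm; $\mathsf{E}_x$ is expectation given $x_0=x$. *)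

theory Defs
  imports "HOL-Probability.Probability"
begin

definition sat :: "real \<Rightarrow> 'a::real_normed_vector \<Rightarrow> 'a" where
  "sat r y = (if norm y \<le> r then y else (r / norm y) *\<^sub>R y)"

fun traj :: "real \<Rightarrow> (nat \<Rightarrow> 'w \<Rightarrow> 'a::real_normed_vector) \<Rightarrow> 'a \<Rightarrow> nat \<Rightarrow> 'w \<Rightarrow> 'a" where
  "traj r w x 0 \<omega> = x"
| "traj r w x (Suc t) \<omega> = traj r w x t \<omega> - sat r (traj r w x t \<omega>) + w t \<omega>"

end

theory Submission
  imports Defs begin

lemma sat_meas[measurable]:
  "(sat r :: 'a::euclidean_space \<Rightarrow> 'a) \<in> borel_measurable borel"
  unfolding sat_def[abs_def] by measurable

lemma traj_meas:
  fixes v :: "nat \<Rightarrow> 'w \<Rightarrow> 'a::euclidean_space"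
  assumes "\<And>i. v i \<in> borel_measurable N"
  shows "(\<lambda>\<omega>. traj r v x t \<omega>) \<in> borel_measurable N"
proof (induction t)
  case 0 then show ?case by simp
next
  case (Suc t)
  have s: "(\<lambda>\<omega>. sat r (traj r v x t \<omega>)) \<in> borel_measurable N"
    using measurable_compose[OF Suc sat_meas] by (simp add: comp_def)
  show ?case using Suc s assms[of t] by simp
qed

lemma traj_cong:
  assumes "\<And>i. i < t \<Longrightarrow> w i \<omega> = v i \<omega>'"
  shows "traj r w x t \<omega> = traj r v x t \<omega>'"
  using assms by (induction t) auto

lemma norm_minus_sat: "r \<ge> 0 \<Longrightarrow> norm (y - sat r y) \<le> norm y"
proof -
  assume r: "r \<ge> 0"
  show ?thesis
  proof (cases "norm y \<le> r")
    case True then show ?thesis by (simp add: sat_def)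
  next
    case False
    then have ny: "norm y > 0" using r by linarith
    have "y - sat r y = (1 - r / norm y) *\<^sub>R y" using False by (simp add: sat_def algebra_simps)
    moreover have "0 \<le> 1 - r / norm y" "1 - r / norm y \<le> 1" using False r ny by (auto simp: field_simps)
    moreover have "(1 - r / norm y) * norm y \<le> 1 * norm y"
      by (rule mult_right_mono) (use False r ny in \<open>auto simp: field_simps\<close>)
    ultimately show ?thesis by simp
  qed
qed

lemma norm_minus_sat_big: "norm y > r \<Longrightarrow> r \<ge> 0 \<Longrightarrow> norm (y - sat r y) = norm y - r"
proof -
  assume a: "norm y > r" "r \<ge> 0"
  then have ny: "norm y > 0" by linarith
  have "y - sat r y = (1 - r / norm y) *\<^sub>R y" using a by (simp add: sat_def algebra_simps)
  moreover have "0 \<le> 1 - r / norm y" using a ny by (auto simp: field_simps)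
  ultimately have "norm (y - sat r y) = (1 - r / norm y) * norm y" by simp
  also have "\<dots> = norm y - r" using ny by (simp add: field_simps)
  finally show ?thesis .
qed

lemma traj_step_le: "r \<ge> 0 \<Longrightarrow> norm (traj r w x (Suc t) \<omega>) \<le> norm (traj r w x t \<omega>) + norm (w t \<omega>)"
  using norm_triangle_ineq[of "traj r w x t \<omega> - sat r (traj r w x t \<omega>)" "w t \<omega>"]
        norm_minus_sat[of r "traj r w x t \<omega>"] by simp

lemma traj_step_big: "r \<ge> 0 \<Longrightarrow> norm (traj r w x t \<omega>) > r \<Longrightarrow>
   norm (traj r w x (Suc t) \<omega>) \<le> norm (traj r w x t \<omega>) - r + norm (w t \<omega>)"
  using norm_triangle_ineq[of "traj r w x t \<omega> - sat r (traj r w x t \<omega>)" "w t \<omega>"]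
        norm_minus_sat_big[of r "traj r w x t \<omega>"] by simp


lemma pow4_le: fixes a b :: real shows "(a+b)^4 \<le> 8*(a^4+b^4)"
proof -
  have 1: "(a+b)^2 \<le> 2*(a^2+b^2)" using sum_squares_ge_zero[of "a-b" 0]
    by (simp add: power2_eq_square algebra_simps)
  have 2: "(a^2+b^2)^2 \<le> 2*(a^4+b^4)"
  proof -
    have "0 \<le> (a^2-b^2)^2" by simp
    then show ?thesis by (simp add: power2_eq_square algebra_simps power4_eq_xxxx)
  qed
  have "(a+b)^4 = ((a+b)^2)^2" by simp
  also have "\<dots> \<le> (2*(a^2+b^2))^2" using 1 by (intro power_mono) auto
  also have "\<dots> = 4*(a^2+b^2)^2" by (simp add: power2_eq_square algebra_simps)
  also have "\<dots> \<le> 8*(a^4+b^4)" using 2 by simp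
  finally show ?thesis .
qed

lemma le_1_pow4: fixes a :: real assumes a: "0 \<le> a" and that: "k \<le> 4" shows "a^k \<le> 1 + a^4"
proof -
  show ?thesis
  proof (cases "a \<le> 1")
    case True then have "a^k \<le> 1" using a by (simp add: power_le_one)
    then show ?thesis by (smt (verit) a zero_le_power)
  next
    case False then have "a^k \<le> a^4" using that by (intro power_increasing) auto
    then show ?thesis by simp
  qed
qed


lemma int_bound:
  fixes f g :: "'a \<Rightarrow> real"
  assumes "integrable N g" "f \<in> borel_measurable N" "\<And>\<omega>. \<omega> \<in> space N \<Longrightarrow> \<bar>f \<omega>\<bar> \<le> g \<omega>"
  shows "integrable N f"
proof (rule Bochner_Integration.integrable_bound[OF assms(1) assms(2)])
  show "AE x in N. norm (f x) \<le> norm (g x)"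
  proof (rule AE_I2)
    fix x assume "x \<in> space N"
    then have "\<bar>f x\<bar> \<le> g x" by (rule assms(3))
    then show "norm (f x) \<le> norm (g x)" by simp
  qed
qed

locale setting = prob_space M for M :: "'w measure" +
  fixes w :: "nat \<Rightarrow> 'w \<Rightarrow> 'd::euclidean_space" and C4 r :: real and x :: 'd
  assumes meas[measurable]: "\<And>t. w t \<in> borel_measurable M"
    and indep: "indep_vars (\<lambda>_. borel) w UNIV"
    and fourth: "\<And>t. integrable M (\<lambda>\<omega>. norm (w t \<omega>) ^ 4) \<and>
                       integral\<^sup>L M (\<lambda>\<omega>. norm (w t \<omega>) ^ 4) \<le> C4"
    and rgt: "r > (SUP t. integral\<^sup>L M (\<lambda>\<omega>. norm (w t \<omega>)))"
begin

abbreviation nn where "nn t \<omega> \<equiv> norm (traj r w x t \<omega>)"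
abbreviation bb where "bb t \<omega> \<equiv> norm (w t \<omega>)"

lemma traj_M[measurable]: "(\<lambda>\<omega>. traj r w x t \<omega>) \<in> borel_measurable M"
  by (rule traj_meas[OF meas])

lemma bb_pow_int: "k \<le> 4 \<Longrightarrow> integrable M (\<lambda>\<omega>. bb t \<omega> ^ k)"
proof (rule int_bound[where g="\<lambda>\<omega>. 1 + bb t \<omega> ^ 4"])
  assume k: "k \<le> 4"
  show "integrable M (\<lambda>\<omega>. 1 + bb t \<omega> ^ 4)" using fourth[of t] by simp
  show "(\<lambda>\<omega>. bb t \<omega> ^ k) \<in> borel_measurable M" by measurable
  fix \<omega> show "\<bar>bb t \<omega> ^ k\<bar> \<le> 1 + bb t \<omega> ^ 4" using le_1_pow4[OF norm_ge_zero k] by simp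
qed

lemma bb_pow_le: "k \<le> 4 \<Longrightarrow> (\<integral>\<omega>. bb t \<omega> ^ k \<partial>M) \<le> 1 + C4"
proof -
  assume k: "k \<le> 4"
  have "(\<integral>\<omega>. bb t \<omega> ^ k \<partial>M) \<le> (\<integral>\<omega>. 1 + bb t \<omega> ^ 4 \<partial>M)"
    by (intro integral_mono bb_pow_int)
       (use k fourth[of t] le_1_pow4[OF norm_ge_zero k] in simp_all)
  also have "\<dots> = 1 + (\<integral>\<omega>. bb t \<omega> ^ 4 \<partial>M)"
    using fourth[of t] by (simp add: prob_space)
  finally show ?thesis using fourth[of t] by simp
qed

definition S where "S = (SUP t. integral\<^sup>L M (\<lambda>\<omega>. bb t \<omega>))"

lemma Eb_le_S: "(\<integral>\<omega>. bb t \<omega> \<partial>M) \<le> S"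
  unfolding S_def
proof (rule cSUP_upper)
  show "bdd_above (range (\<lambda>t. \<integral>\<omega>. bb t \<omega> \<partial>M))"
    by (rule bdd_aboveI2[where M="1+C4"]) (use bb_pow_le[of 1] in simp)
qed simp

lemma S_nonneg: "S \<ge> 0"
proof -
  have "0 \<le> (\<integral>\<omega>. bb 0 \<omega> \<partial>M)" by (rule integral_nonneg_AE) simp
  then show ?thesis using Eb_le_S[of 0] by linarith
qed

lemma r_gt_S: "r > S" using rgt unfolding S_def .
lemma r_pos: "r > 0" using r_gt_S S_nonneg by linarith

lemma nn4_int: "integrable M (\<lambda>\<omega>. nn t \<omega> ^ 4)"
proof (induction t)
  case 0 then show ?case by simp
next
  case (Suc t)
  show ?case
  proof (rule int_bound[where g="\<lambda>\<omega>. 8 * (nn t \<omega> ^ 4 + bb t \<omega> ^ 4)"])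
    show "integrable M (\<lambda>\<omega>. 8 * (nn t \<omega> ^ 4 + bb t \<omega> ^ 4))"
      using Suc bb_pow_int[of 4 t] by auto
    fix \<omega>
    have "nn (Suc t) \<omega> ^ 4 \<le> (nn t \<omega> + bb t \<omega>) ^ 4"
      using traj_step_le[of r w x t \<omega>] r_pos by (intro power_mono) auto
    also have "\<dots> \<le> 8 * (nn t \<omega> ^ 4 + bb t \<omega> ^ 4)" by (rule pow4_le)
    finally show "\<bar>nn (Suc t) \<omega> ^ 4\<bar> \<le> 8 * (nn t \<omega> ^ 4 + bb t \<omega> ^ 4)" by simp
  qed simp
qed


definition PP :: "nat \<Rightarrow> 'w \<Rightarrow> (nat \<Rightarrow> 'd)" where
  "PP j \<omega> = restrict (\<lambda>i. w i \<omega>) {..<j}"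
abbreviation PS :: "nat \<Rightarrow> (nat \<Rightarrow> 'd) measure" where
  "PS j \<equiv> PiM {..<j} (\<lambda>_. borel)"
definition vv :: "nat \<Rightarrow> nat \<Rightarrow> (nat \<Rightarrow> 'd) \<Rightarrow> 'd" where
  "vv j i f = (if i < j then f i else 0)"
definition ct :: "nat \<Rightarrow> nat \<Rightarrow> (nat \<Rightarrow> 'd) \<Rightarrow> 'd" where
  "ct j t f = traj r (vv j) x t f"

lemma vv_meas: "vv j i \<in> borel_measurable (PS j)"
proof (cases "i < j")
  case True
  then have "vv j i = (\<lambda>f. f i)" by (auto simp: vv_def)
  then show ?thesis using True by (simp add: measurable_component_singleton)
next
  case False
  then have "vv j i = (\<lambda>f. 0)" by (auto simp: vv_def)
  then show ?thesis by simp
qed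

lemma ct_meas: "ct j t \<in> borel_measurable (PS j)"
  unfolding ct_def using traj_meas[of "vv j" "PS j", OF vv_meas] by simp

lemma traj_ct: "t \<le> j \<Longrightarrow> traj r w x t \<omega> = ct j t (PP j \<omega>)"
  unfolding ct_def by (rule traj_cong) (auto simp: vv_def PP_def)

lemma PP_meas: "PP j \<in> measurable M (PS j)"
  unfolding PP_def by (rule measurable_restrict) simp

lemma indep_PP: "indep_var (PS j) (PP j) (PiM {j} (\<lambda>_. borel)) (\<lambda>\<omega>. restrict (\<lambda>i. w i \<omega>) {j})"
  unfolding PP_def by (rule indep_var_restrict[OF indep]) auto

lemma indep_prod:
  fixes h :: "(nat \<Rightarrow> 'd) \<Rightarrow> real" and g :: "'d \<Rightarrow> real"
  assumes h: "h \<in> borel_measurable (PS j)" and g: "g \<in> borel_measurable borel"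
    and ih: "integrable M (\<lambda>\<omega>. h (PP j \<omega>))" and ig: "integrable M (\<lambda>\<omega>. g (w j \<omega>))"
  shows "integrable M (\<lambda>\<omega>. h (PP j \<omega>) * g (w j \<omega>))"
    and "(\<integral>\<omega>. h (PP j \<omega>) * g (w j \<omega>) \<partial>M) = (\<integral>\<omega>. h (PP j \<omega>) \<partial>M) * (\<integral>\<omega>. g (w j \<omega>) \<partial>M)"
proof -
  have iv: "indep_var borel (h \<circ> PP j) borel (g \<circ> w j)"
  proof -
    have g': "(\<lambda>f. g (f j)) \<in> borel_measurable (PiM {j} (\<lambda>_. borel))"
      using measurable_compose[OF measurable_component_singleton[of j "{j}" "\<lambda>_. borel"] g] by simp
    have "indep_var borel (h \<circ> PP j) borel ((\<lambda>f. g (f j)) \<circ> (\<lambda>\<omega>. restrict (\<lambda>i. w i \<omega>) {j}))"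
      by (rule indep_var_compose[OF indep_PP h g'])
    moreover have "((\<lambda>f. g (f j)) \<circ> (\<lambda>\<omega>. restrict (\<lambda>i. w i \<omega>) {j})) = g \<circ> w j" by auto
    ultimately show ?thesis by simp
  qed
  show "integrable M (\<lambda>\<omega>. h (PP j \<omega>) * g (w j \<omega>))"
    using indep_var_integrable[OF iv] ih ig by (simp add: comp_def)
  show "(\<integral>\<omega>. h (PP j \<omega>) * g (w j \<omega>) \<partial>M) = (\<integral>\<omega>. h (PP j \<omega>) \<partial>M) * (\<integral>\<omega>. g (w j \<omega>) \<partial>M)"
    using indep_var_lebesgue_integral[OF iv] ih ig by (simp add: comp_def)
qed


definition dl where "dl = r - S"
definition AA where "AA = 8 * ((1 + r) ^ 4 + C4)"
definition RR where "RR = max r (11 * AA / (2 * dl) + 1)"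
definition eta where "eta j \<omega> = bb j \<omega> - r + dl / 2"

lemma dl_pos: "dl > 0" using r_gt_S by (simp add: dl_def)
lemma dl_le: "dl \<le> r" using S_nonneg by (simp add: dl_def)
lemma C4_nonneg: "C4 \<ge> 0"
proof -
  have "0 \<le> (\<integral>\<omega>. bb 0 \<omega> ^ 4 \<partial>M)" by (rule integral_nonneg_AE) simp
  then show ?thesis using fourth[of 0] by linarith
qed
lemma AA_nonneg: "AA \<ge> 0" using C4_nonneg r_pos by (simp add: AA_def)
lemma RR_ge: "RR \<ge> r" "RR \<ge> 11 * AA / (2 * dl) + 1" by (auto simp: RR_def)

lemma eta_meas[measurable]: "eta j \<in> borel_measurable M"
  unfolding eta_def[abs_def] by measurable

lemma base_int: "integrable M (\<lambda>\<omega>. (1 + r + bb j \<omega>) ^ 4)"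
proof (rule int_bound[where g="\<lambda>\<omega>. 8 * ((1 + r) ^ 4 + bb j \<omega> ^ 4)"])
  show "integrable M (\<lambda>\<omega>. 8 * ((1 + r) ^ 4 + bb j \<omega> ^ 4))" using fourth[of j] by simp
  show "(\<lambda>\<omega>. (1 + r + bb j \<omega>) ^ 4) \<in> borel_measurable M" by measurable
  fix \<omega> show "\<bar>(1 + r + bb j \<omega>) ^ 4\<bar> \<le> 8 * ((1 + r) ^ 4 + bb j \<omega> ^ 4)"
    using pow4_le[of "1+r" "bb j \<omega>"] by simp
qed

lemma base_le: "(\<integral>\<omega>. (1 + r + bb j \<omega>) ^ 4 \<partial>M) \<le> AA"
proof -
  have "(\<integral>\<omega>. (1 + r + bb j \<omega>) ^ 4 \<partial>M) \<le> (\<integral>\<omega>. 8 * ((1 + r) ^ 4 + bb j \<omega> ^ 4) \<partial>M)"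
    by (intro integral_mono base_int) (use fourth[of j] pow4_le[of "1+r"] in simp_all)
  also have "\<dots> = 8 * ((1 + r) ^ 4 + (\<integral>\<omega>. bb j \<omega> ^ 4 \<partial>M))"
    using fourth[of j] by (simp add: prob_space)
  also have "\<dots> \<le> AA" using fourth[of j] by (simp add: AA_def)
  finally show ?thesis .
qed

lemma eta_abs: "\<bar>eta j \<omega>\<bar> \<le> 1 + r + bb j \<omega>"
  using dl_pos dl_le r_pos norm_ge_zero[of "w j \<omega>"] unfolding eta_def by linarith

lemma eta_pow_bound: "k \<le> 4 \<Longrightarrow> \<bar>eta j \<omega> ^ k\<bar> \<le> (1 + r + bb j \<omega>) ^ 4"
proof -
  assume k: "k \<le> 4"
  have "\<bar>eta j \<omega> ^ k\<bar> = \<bar>eta j \<omega>\<bar> ^ k" by (simp add: power_abs)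
  also have "\<dots> \<le> (1 + r + bb j \<omega>) ^ k" using eta_abs by (intro power_mono) auto
  also have "\<dots> \<le> (1 + r + bb j \<omega>) ^ 4" using k r_pos by (intro power_increasing) auto
  finally show ?thesis .
qed

lemma eta_pow_int: "k \<le> 4 \<Longrightarrow> integrable M (\<lambda>\<omega>. eta j \<omega> ^ k)"
  by (rule int_bound[OF base_int]) (auto intro: eta_pow_bound)

lemma eta_pow_le: "k \<le> 4 \<Longrightarrow> (\<integral>\<omega>. eta j \<omega> ^ k \<partial>M) \<le> AA"
proof -
  assume k: "k \<le> 4"
  have "(\<integral>\<omega>. eta j \<omega> ^ k \<partial>M) \<le> (\<integral>\<omega>. (1 + r + bb j \<omega>) ^ 4 \<partial>M)"
    by (intro integral_mono eta_pow_int base_int k) (use eta_pow_bound[OF k] in \<open>simp add: abs_le_iff\<close>)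
  then show ?thesis using base_le[of j] by linarith
qed

lemma eta_mean: "(\<integral>\<omega>. eta j \<omega> \<partial>M) \<le> - dl / 2"
proof -
  have "(\<integral>\<omega>. eta j \<omega> \<partial>M) = (\<integral>\<omega>. bb j \<omega> \<partial>M) - r + dl / 2"
    unfolding eta_def using bb_pow_int[of 1 j] by (simp add: prob_space)
  then show ?thesis using Eb_le_S[of j] unfolding dl_def by (simp add: field_simps)
qed

lemma nn_int_poly:
  assumes "f \<in> borel_measurable M" "\<And>\<omega>. \<bar>f \<omega>\<bar> \<le> K * (1 + nn t \<omega> ^ 4)"
  shows "integrable M f"
  by (rule int_bound[OF _ assms(1), where g="\<lambda>\<omega>. K * (1 + nn t \<omega> ^ 4)"])
     (use nn4_int[of t] assms(2) in auto)

lemma nnc_pow_bound: "c \<ge> 0 \<Longrightarrow> k \<le> 4 \<Longrightarrow> (nn t \<omega> + c) ^ k \<le> (9 + 8 * c ^ 4) * (1 + nn t \<omega> ^ 4)"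
proof -
  assume c: "c \<ge> 0" and k: "k \<le> 4"
  have "(nn t \<omega> + c) ^ k \<le> 1 + (nn t \<omega> + c) ^ 4" using c by (intro le_1_pow4 k) simp
  also have "\<dots> \<le> 1 + 8 * (nn t \<omega> ^ 4 + c ^ 4)" using pow4_le by simp
  also have "\<dots> \<le> (9 + 8 * c ^ 4) * (1 + nn t \<omega> ^ 4)"
    using c by (simp add: algebra_simps)
  finally show ?thesis .
qed


lemma poly_neg:
  fixes W :: real
  assumes "W \<ge> 11 * AA / (2 * dl) + 1"
  shows "- 2 * dl * W ^ 3 + 6 * AA * W ^ 2 + 4 * AA * W + AA \<le> 0"
proof -
  have W1: "W \<ge> 1" using assms AA_nonneg dl_pos by (smt (verit) divide_nonneg_pos)
  have "11 * AA / (2 * dl) \<le> W" using assms by linarith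
  then have a: "11 * AA \<le> 2 * dl * W" using dl_pos by (simp add: field_simps)
  have b: "AA * W \<le> AA * W ^ 2" using W1 AA_nonneg by (intro mult_left_mono) (auto simp: power2_eq_square)
  have c: "AA \<le> AA * W ^ 2" using W1 AA_nonneg
    by (metis mult.right_neutral mult_left_mono one_le_power)
  have d: "11 * AA * W ^ 2 \<le> 2 * dl * W * W ^ 2" using a by (intro mult_right_mono) auto
  have "2 * dl * W * W ^ 2 = 2 * dl * W ^ 3" by (simp add: power2_eq_square power3_eq_cube)
  then show ?thesis using b c d by linarith
qed

lemma step:
  fixes z :: "(nat \<Rightarrow> 'd) \<Rightarrow> real"
  assumes zm[measurable]: "z \<in> borel_measurable (PS j)" and z0: "\<And>f. 0 \<le> z f" and z1: "\<And>f. z f \<le> 1"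
    and zR: "\<And>\<omega>. z (PP j \<omega>) \<noteq> 0 \<Longrightarrow> nn j \<omega> > RR" and c: "c \<ge> 0"
  shows "(\<integral>\<omega>. z (PP j \<omega>) * (nn (Suc j) \<omega> + c + dl / 2) ^ 4 \<partial>M)
         \<le> (\<integral>\<omega>. z (PP j \<omega>) * (nn j \<omega> + c) ^ 4 \<partial>M)"
proof -
  note ct_meas[measurable]
  define Z where "Z \<omega> = z (PP j \<omega>)" for \<omega>
  define W where "W \<omega> = nn j \<omega> + c" for \<omega>
  define F where "F k l \<omega> = Z \<omega> * W \<omega> ^ k * eta j \<omega> ^ l" for k l :: nat and \<omega>
  define J where "J k = (\<integral>\<omega>. Z \<omega> * W \<omega> ^ k \<partial>M)" for k :: nat
  define m where "m l = (\<integral>\<omega>. eta j \<omega> ^ l \<partial>M)" for l :: nat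
  have Zm[measurable]: "Z \<in> borel_measurable M"
    unfolding Z_def[abs_def] using measurable_compose[OF PP_meas zm] by (simp add: comp_def)
  have Wm[measurable]: "W \<in> borel_measurable M" unfolding W_def[abs_def] by measurable
  have W_eq: "W \<omega> = norm (ct j j (PP j \<omega>)) + c" for \<omega> using traj_ct[of j j \<omega>] by (simp add: W_def)
  have W0: "W \<omega> \<ge> 0" for \<omega> using c by (simp add: W_def)
  have ZW_int: "integrable M (\<lambda>\<omega>. Z \<omega> * W \<omega> ^ k)" if k: "k \<le> 4" for k
  proof (rule nn_int_poly[where t=j and K="9 + 8 * c ^ 4"])
    show "(\<lambda>\<omega>. Z \<omega> * W \<omega> ^ k) \<in> borel_measurable M" by measurable
    fix \<omega>
    have "\<bar>Z \<omega> * W \<omega> ^ k\<bar> \<le> 1 * W \<omega> ^ k"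
      unfolding abs_mult using z0 z1 W0 by (intro mult_mono) (auto simp: Z_def)
    also have "\<dots> \<le> (9 + 8 * c ^ 4) * (1 + nn j \<omega> ^ 4)"
      using nnc_pow_bound[OF c k] by (simp add: W_def)
    finally show "\<bar>Z \<omega> * W \<omega> ^ k\<bar> \<le> (9 + 8 * c ^ 4) * (1 + nn j \<omega> ^ 4)" .
  qed
  have fac: "integrable M (F k l) \<and> (\<integral>\<omega>. F k l \<omega> \<partial>M) = J k * m l" if k: "k \<le> 4" and l: "l \<le> 4" for k l
  proof -
    define h where "h f = z f * (norm (ct j j f) + c) ^ k" for f
    define g where "g y = (norm y - r + dl / 2) ^ l" for y :: 'd
    have hm: "h \<in> borel_measurable (PS j)" unfolding h_def[abs_def] by measurable
    have gm: "g \<in> borel_measurable borel" unfolding g_def[abs_def] by measurable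
    have he: "h (PP j \<omega>) = Z \<omega> * W \<omega> ^ k" for \<omega> by (simp add: h_def Z_def W_eq)
    have ge: "g (w j \<omega>) = eta j \<omega> ^ l" for \<omega> by (simp add: g_def eta_def)
    have Fe: "F k l = (\<lambda>\<omega>. h (PP j \<omega>) * g (w j \<omega>))" by (auto simp: F_def he ge)
    have ih: "integrable M (\<lambda>\<omega>. h (PP j \<omega>))" using ZW_int[OF k] by (simp add: he)
    have ig: "integrable M (\<lambda>\<omega>. g (w j \<omega>))" using eta_pow_int[OF l] by (simp add: ge)
    show ?thesis using indep_prod[OF hm gm ih ig] unfolding Fe J_def m_def by (simp add: he ge)
  qed
  have pt1: "Z \<omega> * (nn (Suc j) \<omega> + c + dl / 2) ^ 4 \<le> Z \<omega> * (W \<omega> + eta j \<omega>) ^ 4" for \<omega>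
  proof (cases "Z \<omega> = 0")
    case True then show ?thesis by simp
  next
    case False
    then have "nn j \<omega> > RR" using zR by (simp add: Z_def)
    then have "nn j \<omega> > r" using RR_ge by linarith
    then have "nn (Suc j) \<omega> \<le> nn j \<omega> - r + bb j \<omega>" using traj_step_big[of r] r_pos by simp
    then have "nn (Suc j) \<omega> + c + dl / 2 \<le> W \<omega> + eta j \<omega>" by (simp add: W_def eta_def)
    moreover have "0 \<le> nn (Suc j) \<omega> + c + dl / 2" using c dl_pos by simp
    ultimately show ?thesis using z0[of "PP j \<omega>"] unfolding Z_def
      by (intro mult_left_mono power_mono) auto
  qed
  have expand: "Z \<omega> * (W \<omega> + eta j \<omega>) ^ 4 = F 4 0 \<omega> + 4 * F 3 1 \<omega> + 6 * F 2 2 \<omega> + 4 * F 1 3 \<omega> + F 0 4 \<omega>" for \<omega>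
    by (simp add: F_def eval_nat_numeral algebra_simps)
  have F_int: "integrable M (F k l)" if "k \<le> 4" "l \<le> 4" for k l using fac that by blast
  have lhs_int: "integrable M (\<lambda>\<omega>. Z \<omega> * (nn (Suc j) \<omega> + c + dl / 2) ^ 4)"
  proof (rule nn_int_poly[where t="Suc j" and K="9 + 8 * (c + dl/2) ^ 4"])
    show "(\<lambda>\<omega>. Z \<omega> * (nn (Suc j) \<omega> + c + dl / 2) ^ 4) \<in> borel_measurable M" by measurable
    fix \<omega>
    have cc: "c + dl / 2 \<ge> 0" using c dl_pos by simp
    have "\<bar>Z \<omega> * (nn (Suc j) \<omega> + c + dl / 2) ^ 4\<bar> \<le> 1 * (nn (Suc j) \<omega> + (c + dl / 2)) ^ 4"
      unfolding abs_mult using z0 z1 cc by (intro mult_mono) (auto simp: Z_def add.assoc)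
    also have "\<dots> \<le> (9 + 8 * (c + dl/2) ^ 4) * (1 + nn (Suc j) \<omega> ^ 4)"
      using nnc_pow_bound[OF cc, of 4 "Suc j" \<omega>] by (simp del: traj.simps)
    finally show "\<bar>Z \<omega> * (nn (Suc j) \<omega> + c + dl / 2) ^ 4\<bar> \<le> (9 + 8 * (c + dl/2) ^ 4) * (1 + nn (Suc j) \<omega> ^ 4)" .
  qed
  have rhs_int: "integrable M (\<lambda>\<omega>. Z \<omega> * (W \<omega> + eta j \<omega>) ^ 4)"
    unfolding expand using F_int[of 4 0] F_int[of 3 1] F_int[of 2 2] F_int[of 1 3] F_int[of 0 4] by simp
  have "(\<integral>\<omega>. Z \<omega> * (nn (Suc j) \<omega> + c + dl / 2) ^ 4 \<partial>M) \<le> (\<integral>\<omega>. Z \<omega> * (W \<omega> + eta j \<omega>) ^ 4 \<partial>M)"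
    by (rule integral_mono[OF lhs_int rhs_int pt1])
  also have "\<dots> = J 4 * m 0 + 4 * (J 3 * m 1) + 6 * (J 2 * m 2) + 4 * (J 1 * m 3) + J 0 * m 4"
    unfolding expand using fac[of 4 0] fac[of 3 1] fac[of 2 2] fac[of 1 3] fac[of 0 4] by simp
  also have "\<dots> \<le> J 4 + (- 2 * dl * J 3 + 6 * AA * J 2 + 4 * AA * J 1 + AA * J 0)"
  proof -
    have Jnn: "J k \<ge> 0" for k unfolding J_def
      by (rule integral_nonneg_AE) (use z0 W0 in \<open>auto simp: Z_def\<close>)
    have m0: "m 0 = 1" by (simp add: m_def prob_space)
    have "J 3 * m 1 \<le> J 3 * (- dl / 2)" using Jnn eta_mean[of j] by (intro mult_left_mono) (auto simp: m_def)
    moreover have "J k * m l \<le> J k * AA" if "l \<le> 4" for k l using Jnn eta_pow_le[OF that, of j]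
      by (intro mult_left_mono) (auto simp: m_def)
    ultimately have "J 3 * m 1 \<le> J 3 * (- dl / 2)" "J 2 * m 2 \<le> J 2 * AA" "J 1 * m 3 \<le> J 1 * AA"
      "J 0 * m 4 \<le> J 0 * AA" by auto
    then show ?thesis using m0 by (simp add: algebra_simps)
  qed
  also have "\<dots> \<le> J 4"
  proof -
    have "- 2 * dl * J 3 + 6 * AA * J 2 + 4 * AA * J 1 + AA * J 0
          = (\<integral>\<omega>. Z \<omega> * (- 2 * dl * W \<omega> ^ 3 + 6 * AA * W \<omega> ^ 2 + 4 * AA * W \<omega> + AA) \<partial>M)"
    proof -
      have eq: "(\<lambda>\<omega>. Z \<omega> * (- 2 * dl * W \<omega> ^ 3 + 6 * AA * W \<omega> ^ 2 + 4 * AA * W \<omega> + AA)) =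
        (\<lambda>\<omega>. (- 2 * dl) * (Z \<omega> * W \<omega> ^ 3) + (6 * AA) * (Z \<omega> * W \<omega> ^ 2) + (4 * AA) * (Z \<omega> * W \<omega> ^ 1)
          + AA * (Z \<omega> * W \<omega> ^ 0))"
        by (auto simp: algebra_simps)
      show ?thesis unfolding eq J_def
        using ZW_int[of 3] ZW_int[of 2] ZW_int[of 1] ZW_int[of 0]
        by (simp del: power_one_right power_0)
    qed
    also have "\<dots> \<le> 0"
    proof -
      have pw: "Z \<omega> * (- 2 * dl * W \<omega> ^ 3 + 6 * AA * W \<omega> ^ 2 + 4 * AA * W \<omega> + AA) \<le> 0" for \<omega>
      proof (cases "Z \<omega> = 0")
        case False
        then have "nn j \<omega> > RR" using zR by (simp add: Z_def)
        then have "W \<omega> \<ge> 11 * AA / (2 * dl) + 1" using RR_ge c by (simp add: W_def)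
        then have "- 2 * dl * W \<omega> ^ 3 + 6 * AA * W \<omega> ^ 2 + 4 * AA * W \<omega> + AA \<le> 0" by (rule poly_neg)
        then show ?thesis using z0[of "PP j \<omega>"] by (simp add: Z_def mult_nonneg_nonpos)
      qed simp
      have "0 \<le> (\<integral>\<omega>. - (Z \<omega> * (- 2 * dl * W \<omega> ^ 3 + 6 * AA * W \<omega> ^ 2 + 4 * AA * W \<omega> + AA)) \<partial>M)"
        by (rule integral_nonneg_AE) (use pw in \<open>auto intro!: AE_I2 simp del: mult_minus_left\<close>)
      then show ?thesis by (simp only: Bochner_Integration.integral_minus)
    qed
    finally show ?thesis by simp
  qed
  finally show ?thesis unfolding J_def Z_def W_def by simp
qed


definition ind where "ind m j \<omega> = (\<Prod>i\<in>{m..j}. if nn i \<omega> > RR then 1 else (0::real))"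

lemma ind_meas[measurable]: "ind m j \<in> borel_measurable M"
  unfolding ind_def[abs_def] by measurable

lemma ind01: "0 \<le> ind m j \<omega>" "ind m j \<omega> \<le> 1"
  unfolding ind_def by (auto intro!: prod_nonneg prod_le_1)

lemma ind_Suc: "m \<le> Suc j \<Longrightarrow> ind m (Suc j) \<omega> = ind m j \<omega> * (if nn (Suc j) \<omega> > RR then 1 else 0)"
  unfolding ind_def by (simp del: traj.simps)

definition Yf where
  "Yf g m j \<omega> = g (PP m \<omega>) * ind m j \<omega> * (nn j \<omega> + dl * real (j + 1 - m) / 2) ^ 4"

context
  fixes g :: "(nat \<Rightarrow> 'd) \<Rightarrow> real" and m :: nat
  assumes gm[measurable]: "g \<in> borel_measurable (PS m)" and g0: "\<And>f. 0 \<le> g f" and g1: "\<And>f. g f \<le> 1"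
begin

lemma gP_meas[measurable]: "(\<lambda>\<omega>. g (PP m \<omega>)) \<in> borel_measurable M"
  using measurable_compose[OF PP_meas gm] by (simp add: comp_def)

lemma Yf_int: "integrable M (Yf g m j)"
proof (rule nn_int_poly[where t=j and K="9 + 8 * (dl * real (j + 1 - m) / 2) ^ 4"])
  show "Yf g m j \<in> borel_measurable M" unfolding Yf_def[abs_def] by measurable
  fix \<omega>
  have cc: "dl * real (j + 1 - m) / 2 \<ge> 0" using dl_pos by simp
  have "\<bar>Yf g m j \<omega>\<bar> \<le> 1 * (nn j \<omega> + dl * real (j + 1 - m) / 2) ^ 4"
    unfolding Yf_def abs_mult using g0 g1 ind01 cc
    by (intro mult_mono) (auto intro: mult_le_one)
  also have "\<dots> \<le> (9 + 8 * (dl * real (j + 1 - m) / 2) ^ 4) * (1 + nn j \<omega> ^ 4)"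
    using nnc_pow_bound[OF cc, of 4 j \<omega>] by simp
  finally show "\<bar>Yf g m j \<omega>\<bar> \<le> (9 + 8 * (dl * real (j + 1 - m) / 2) ^ 4) * (1 + nn j \<omega> ^ 4)" .
qed

lemma Yf_decr:
  assumes mj: "m \<le> j"
  shows "(\<integral>\<omega>. Yf g m (Suc j) \<omega> \<partial>M) \<le> (\<integral>\<omega>. Yf g m j \<omega> \<partial>M)"
proof -
  note ct_meas[measurable]
  define c where "c = dl * real (j + 1 - m) / 2"
  have c0: "c \<ge> 0" using dl_pos by (simp add: c_def)
  define z where "z f = g (restrict f {..<m}) * (\<Prod>i\<in>{m..j}. if norm (ct j i f) > RR then 1 else (0::real))" for f
  have rm: "(\<lambda>f. restrict f {..<m}) \<in> measurable (PS j) (PS m)"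
    by (rule measurable_restrict_subset) (use mj in auto)
  have zm: "z \<in> borel_measurable (PS j)"
  proof -
    have "(\<lambda>f. g (restrict f {..<m})) \<in> borel_measurable (PS j)"
      using measurable_compose[OF rm gm] by (simp add: comp_def)
    then show ?thesis unfolding z_def[abs_def] by measurable
  qed
  have zP: "z (PP j \<omega>) = g (PP m \<omega>) * ind m j \<omega>" for \<omega>
  proof -
    have "restrict (PP j \<omega>) {..<m} = PP m \<omega>" using mj by (auto simp: PP_def restrict_def fun_eq_iff)
    moreover have "(\<Prod>i\<in>{m..j}. if norm (ct j i (PP j \<omega>)) > RR then 1 else (0::real)) = ind m j \<omega>"
      unfolding ind_def by (intro prod.cong) (auto simp: traj_ct)
    ultimately show ?thesis by (simp add: z_def)
  qed
  have z0: "0 \<le> z f" for f unfolding z_def by (intro mult_nonneg_nonneg prod_nonneg) (use g0 in auto)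
  have z1: "z f \<le> 1" for f unfolding z_def using g0 g1 by (auto intro!: mult_le_one prod_le_1 prod_nonneg)
  have zR: "nn j \<omega> > RR" if "z (PP j \<omega>) \<noteq> 0" for \<omega>
  proof (rule ccontr)
    assume "\<not> nn j \<omega> > RR"
    then have "ind m j \<omega> = 0" unfolding ind_def using mj by (intro prod_zero) auto
    then show False using that zP by simp
  qed
  have st: "(\<integral>\<omega>. z (PP j \<omega>) * (nn (Suc j) \<omega> + c + dl / 2) ^ 4 \<partial>M)
         \<le> (\<integral>\<omega>. z (PP j \<omega>) * (nn j \<omega> + c) ^ 4 \<partial>M)"
    by (rule step[OF zm z0 z1 zR c0])
  have rhs: "(\<lambda>\<omega>. z (PP j \<omega>) * (nn j \<omega> + c) ^ 4) = Yf g m j"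
    by (auto simp: zP Yf_def c_def)
  have pt: "Yf g m (Suc j) \<omega> \<le> z (PP j \<omega>) * (nn (Suc j) \<omega> + c + dl / 2) ^ 4" for \<omega>
  proof -
    have e: "nn (Suc j) \<omega> + dl * real (Suc j + 1 - m) / 2 = nn (Suc j) \<omega> + c + dl / 2"
      using mj by (simp add: c_def of_nat_diff field_simps del: traj.simps)
    have "Yf g m (Suc j) \<omega> = g (PP m \<omega>) * ind m j \<omega> * (if nn (Suc j) \<omega> > RR then 1 else 0)
            * (nn (Suc j) \<omega> + c + dl / 2) ^ 4"
      unfolding Yf_def e using mj by (simp add: ind_Suc del: traj.simps)
    also have "\<dots> \<le> g (PP m \<omega>) * ind m j \<omega> * 1 * (nn (Suc j) \<omega> + c + dl / 2) ^ 4"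
      using g0 ind01 by (intro mult_right_mono mult_left_mono) (auto simp del: traj.simps)
    finally show ?thesis by (simp add: zP del: traj.simps)
  qed
  have lhs_int: "integrable M (\<lambda>\<omega>. z (PP j \<omega>) * (nn (Suc j) \<omega> + c + dl / 2) ^ 4)"
  proof (rule nn_int_poly[where t="Suc j" and K="9 + 8 * (c + dl/2) ^ 4"])
    show "(\<lambda>\<omega>. z (PP j \<omega>) * (nn (Suc j) \<omega> + c + dl / 2) ^ 4) \<in> borel_measurable M"
      unfolding zP by measurable
    fix \<omega>
    have cc: "c + dl / 2 \<ge> 0" using c0 dl_pos by simp
    have "\<bar>z (PP j \<omega>) * (nn (Suc j) \<omega> + c + dl / 2) ^ 4\<bar> \<le> 1 * (nn (Suc j) \<omega> + (c + dl / 2)) ^ 4"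
      unfolding abs_mult using z0 z1 cc by (intro mult_mono) (auto simp: add.assoc simp del: traj.simps)
    also have "\<dots> \<le> (9 + 8 * (c + dl/2) ^ 4) * (1 + nn (Suc j) \<omega> ^ 4)"
      using nnc_pow_bound[OF cc, of 4 "Suc j" \<omega>] by (simp del: traj.simps)
    finally show "\<bar>z (PP j \<omega>) * (nn (Suc j) \<omega> + c + dl / 2) ^ 4\<bar> \<le> (9 + 8 * (c + dl/2) ^ 4) * (1 + nn (Suc j) \<omega> ^ 4)" .
  qed
  have "(\<integral>\<omega>. Yf g m (Suc j) \<omega> \<partial>M) \<le> (\<integral>\<omega>. z (PP j \<omega>) * (nn (Suc j) \<omega> + c + dl / 2) ^ 4 \<partial>M)"
    by (rule integral_mono[OF Yf_int lhs_int pt])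
  also have "\<dots> \<le> (\<integral>\<omega>. Yf g m j \<omega> \<partial>M)" using st unfolding rhs .
  finally show ?thesis .
qed

lemma Yf_bound: "m \<le> j \<Longrightarrow> (\<integral>\<omega>. Yf g m j \<omega> \<partial>M) \<le> (\<integral>\<omega>. Yf g m m \<omega> \<partial>M)"
proof (induction j rule: dec_induct)
  case base then show ?case by simp
next
  case (step j) then show ?case using Yf_decr[of j] by linarith
qed

end


lemma decomp:
  "(if nn t \<omega> > RR then 1 else 0) \<le>
     (\<Sum>s<t. (if nn s \<omega> \<le> RR then 1 else 0) * ind (Suc s) t \<omega>) + ind 0 t \<omega>"
proof (induction t)
  case 0 then show ?case by (simp add: ind_def)
next
  case (Suc t)
  show ?case
  proof (cases "nn (Suc t) \<omega> > RR")
    case False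
    have "0 \<le> (\<Sum>s<Suc t. (if nn s \<omega> \<le> RR then 1 else 0) * ind (Suc s) (Suc t) \<omega>) + ind 0 (Suc t) \<omega>"
      using ind01 by (intro add_nonneg_nonneg sum_nonneg mult_nonneg_nonneg) auto
    then show ?thesis using False by (simp del: traj.simps)
  next
    case True
    have e1: "ind a (Suc t) \<omega> = ind a t \<omega>" if "a \<le> Suc t" for a using ind_Suc[OF that] True by simp
    have e2: "ind (Suc t) (Suc t) \<omega> = 1" using True by (simp add: ind_def del: traj.simps)
    have "(\<Sum>s<Suc t. (if nn s \<omega> \<le> RR then 1 else 0) * ind (Suc s) (Suc t) \<omega>) + ind 0 (Suc t) \<omega>
        = (\<Sum>s<t. (if nn s \<omega> \<le> RR then 1 else 0) * ind (Suc s) t \<omega>) + ind 0 t \<omega>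
          + (if nn t \<omega> \<le> RR then 1 else 0)"
      using e1 e2 by (simp del: traj.simps)
    moreover have "(if nn t \<omega> > RR then 1 else 0) + (if nn t \<omega> \<le> RR then 1 else 0) = (1::real)" by auto
    ultimately show ?thesis using Suc True by (simp del: traj.simps)
  qed
qed

lemma sq_le:
  fixes a k :: real assumes a: "a \<ge> 0" and k: "k > 0"
  shows "a ^ 2 \<le> 4 / (dl ^ 2 * k ^ 2) * (a + dl * k / 2) ^ 4"
proof -
  define b where "b = dl * k / 2"
  have b: "b > 0" using dl_pos k by (simp add: b_def)
  have "a ^ 2 * b ^ 2 \<le> (a + b) ^ 2 * (a + b) ^ 2"
    using a b by (intro mult_mono power_mono) auto
  also have "\<dots> = (a + b) ^ 4" by (simp add: power_add[symmetric])
  finally have "a ^ 2 \<le> (a + b) ^ 4 / b ^ 2" using b by (simp add: field_simps)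
  also have "(a + b) ^ 4 / b ^ 2 = 4 / (dl ^ 2 * k ^ 2) * (a + dl * k / 2) ^ 4"
    by (simp add: b_def field_simps power2_eq_square)
  finally show ?thesis .
qed

lemma inv_sq_sum: "(\<Sum>s<t. 1 / (real (t - s)) ^ 2) \<le> 2 - 2 / (real t + 1)"
proof (induction t)
  case 0 then show ?case by simp
next
  case (Suc t)
  have "(\<Sum>s<Suc t. 1 / (real (Suc t - s)) ^ 2) = 1 / (real t + 1) ^ 2 + (\<Sum>s<t. 1 / (real (t - s)) ^ 2)"
    by (subst sum.lessThan_Suc_shift) simp
  also have "\<dots> \<le> 1 / (real t + 1) ^ 2 + (2 - 2 / (real t + 1))" using Suc by simp
  also have "\<dots> \<le> 2 - 2 / (real (Suc t) + 1)"
  proof -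
    define u where "u = real t + 1"
    have u: "u \<ge> 1" by (simp add: u_def)
    have e: "2 / u - 2 / (u + 1) = 2 / (u * (u + 1))" using u by (simp add: field_simps)
    have "u * (u + 1) \<le> u * (2 * u)" using u by (intro mult_left_mono) auto
    then have "1 / u ^ 2 \<le> 2 / (u * (u + 1))" using u by (simp add: divide_simps power2_eq_square)
    then have "1 / (real t + 1) ^ 2 \<le> 2 / (real t + 1) - 2 / (real t + 2)"
      using e by (simp add: u_def add.assoc)
    moreover have "2 / (real (Suc t) + 1) = 2 / (real t + 2)" by (simp add: add.commute)
    ultimately show ?thesis by linarith
  qed
  finally show ?case .
qed

lemma basec_int: "integrable M (\<lambda>\<omega>. (a + bb j \<omega>) ^ 4)"
proof (rule int_bound[where g="\<lambda>\<omega>. 8 * (a ^ 4 + bb j \<omega> ^ 4)"])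
  show "integrable M (\<lambda>\<omega>. 8 * (a ^ 4 + bb j \<omega> ^ 4))" using fourth[of j] by simp
  show "(\<lambda>\<omega>. (a + bb j \<omega>) ^ 4) \<in> borel_measurable M" by measurable
  fix \<omega> show "\<bar>(a + bb j \<omega>) ^ 4\<bar> \<le> 8 * (a ^ 4 + bb j \<omega> ^ 4)"
    using pow4_le[of a "bb j \<omega>"] by (simp add: abs_le_iff)
qed

lemma basec_le: "(\<integral>\<omega>. (a + bb j \<omega>) ^ 4 \<partial>M) \<le> 8 * (a ^ 4 + C4)"
proof -
  have "(\<integral>\<omega>. (a + bb j \<omega>) ^ 4 \<partial>M) \<le> (\<integral>\<omega>. 8 * (a ^ 4 + bb j \<omega> ^ 4) \<partial>M)"
    by (intro integral_mono basec_int) (use fourth[of j] pow4_le[of a] in simp_all)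
  also have "\<dots> = 8 * (a ^ 4 + (\<integral>\<omega>. bb j \<omega> ^ 4 \<partial>M))"
    using fourth[of j] by (simp add: prob_space)
  also have "\<dots> \<le> 8 * (a ^ 4 + C4)" using fourth[of j] by simp
  finally show ?thesis .
qed

definition gs where "gs s f = (if norm (ct (Suc s) s f) \<le> RR then 1 else (0::real))"
definition BB where "BB = 8 * ((1 + RR + r) ^ 4 + C4)"

lemma gs_meas: "gs s \<in> borel_measurable (PS (Suc s))"
  using ct_meas[of "Suc s" s] unfolding gs_def[abs_def] by measurable

lemma gs_P: "gs s (PP (Suc s) \<omega>) = (if nn s \<omega> \<le> RR then 1 else 0)"
  using traj_ct[of s "Suc s" \<omega>] by (simp add: gs_def)

lemma gs01: "0 \<le> gs s f" "gs s f \<le> 1" by (auto simp: gs_def)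

lemma Ys_bound: "(\<integral>\<omega>. Yf (gs s) (Suc s) (Suc s) \<omega> \<partial>M) \<le> BB"
proof -
  have pt: "Yf (gs s) (Suc s) (Suc s) \<omega> \<le> (1 + RR + r + bb s \<omega>) ^ 4" for \<omega>
  proof (cases "nn s \<omega> \<le> RR")
    case True
    have "nn (Suc s) \<omega> \<le> nn s \<omega> + bb s \<omega>" using traj_step_le[of r] r_pos by simp
    then have "nn (Suc s) \<omega> + dl / 2 \<le> 1 + RR + r + bb s \<omega>" using True dl_le dl_pos by linarith
    then have "(nn (Suc s) \<omega> + dl / 2) ^ 4 \<le> (1 + RR + r + bb s \<omega>) ^ 4"
      using dl_pos by (intro power_mono) auto
    moreover have "Yf (gs s) (Suc s) (Suc s) \<omega> = ind (Suc s) (Suc s) \<omega> * (nn (Suc s) \<omega> + dl / 2) ^ 4"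
      unfolding Yf_def gs_P using True by (simp del: traj.simps)
    moreover have "ind (Suc s) (Suc s) \<omega> * (nn (Suc s) \<omega> + dl / 2) ^ 4 \<le> 1 * (nn (Suc s) \<omega> + dl / 2) ^ 4"
      by (intro mult_right_mono ind01) (use dl_pos in simp)
    ultimately show ?thesis by (simp del: traj.simps)
  next
    case False
    then show ?thesis unfolding Yf_def gs_P by simp
  qed
  have "(\<integral>\<omega>. Yf (gs s) (Suc s) (Suc s) \<omega> \<partial>M) \<le> (\<integral>\<omega>. (1 + RR + r + bb s \<omega>) ^ 4 \<partial>M)"
    by (rule integral_mono[OF Yf_int[OF gs_meas gs01] basec_int[of "1 + RR + r", simplified add.assoc[symmetric]] pt])
  also have "\<dots> \<le> BB" using basec_le[of "1 + RR + r" s] by (simp add: BB_def add.assoc)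
  finally show ?thesis .
qed


definition CC where "CC = RR ^ 2 + 8 * BB / dl ^ 2 + 4 / dl ^ 2 * (norm x + dl / 2) ^ 4"

lemma pointwise:
  "nn t \<omega> ^ 2 \<le> RR ^ 2 + (\<Sum>s<t. (4 / (dl ^ 2 * (real (t - s)) ^ 2)) * Yf (gs s) (Suc s) t \<omega>)
      + 4 / dl ^ 2 * Yf (\<lambda>f. 1) 0 t \<omega>"
proof -
  define I where "I = (if nn t \<omega> > RR then 1 else (0::real))"
  have RR0: "RR \<ge> 0" using RR_ge(1) r_pos by linarith
  have a: "nn t \<omega> ^ 2 \<le> RR ^ 2 + nn t \<omega> ^ 2 * I"
  proof (cases "nn t \<omega> > RR")
    case False then have "nn t \<omega> ^ 2 \<le> RR ^ 2" by (intro power_mono) auto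
    then show ?thesis by (simp add: I_def)
  qed (simp add: I_def)
  have b: "nn t \<omega> ^ 2 * I \<le> nn t \<omega> ^ 2 *
      ((\<Sum>s<t. (if nn s \<omega> \<le> RR then 1 else 0) * ind (Suc s) t \<omega>) + ind 0 t \<omega>)"
    unfolding I_def by (intro mult_left_mono decomp) auto
  have c: "nn t \<omega> ^ 2 * ((if nn s \<omega> \<le> RR then 1 else 0) * ind (Suc s) t \<omega>)
        \<le> (4 / (dl ^ 2 * (real (t - s)) ^ 2)) * Yf (gs s) (Suc s) t \<omega>" if s: "s < t" for s
  proof -
    have k: "real (t - s) > 0" using s by simp
    have e: "real (t + 1 - Suc s) = real (t - s)" using s by simp
    have "nn t \<omega> ^ 2 * ((if nn s \<omega> \<le> RR then 1 else 0) * ind (Suc s) t \<omega>)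
      \<le> (4 / (dl ^ 2 * (real (t - s)) ^ 2) * (nn t \<omega> + dl * real (t - s) / 2) ^ 4)
          * ((if nn s \<omega> \<le> RR then 1 else 0) * ind (Suc s) t \<omega>)"
      using ind01 by (intro mult_right_mono sq_le[OF norm_ge_zero k]) auto
    also have "\<dots> = (4 / (dl ^ 2 * (real (t - s)) ^ 2)) * Yf (gs s) (Suc s) t \<omega>"
      unfolding Yf_def gs_P e by (simp add: algebra_simps)
    finally show ?thesis .
  qed
  have d: "nn t \<omega> ^ 2 * ind 0 t \<omega> \<le> 4 / dl ^ 2 * Yf (\<lambda>f. 1) 0 t \<omega>"
  proof -
    have k: "real t + 1 > 0" by simp
    have Y0: "0 \<le> (nn t \<omega> + dl * (real t + 1) / 2) ^ 4" using dl_pos by simp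
    have "nn t \<omega> ^ 2 * ind 0 t \<omega> \<le> (4 / (dl ^ 2 * (real t + 1) ^ 2) * (nn t \<omega> + dl * (real t + 1) / 2) ^ 4) * ind 0 t \<omega>"
      using ind01 by (intro mult_right_mono sq_le[OF norm_ge_zero k]) auto
    also have "\<dots> \<le> (4 / dl ^ 2 * (nn t \<omega> + dl * (real t + 1) / 2) ^ 4) * ind 0 t \<omega>"
    proof -
      have h1: "4 / (dl ^ 2 * (real t + 1) ^ 2) \<le> 4 / dl ^ 2"
        using dl_pos by (intro divide_left_mono) (auto intro!: mult_pos_pos)
      have h2: "4 / (dl ^ 2 * (real t + 1) ^ 2) * (nn t \<omega> + dl * (real t + 1) / 2) ^ 4
                 \<le> 4 / dl ^ 2 * (nn t \<omega> + dl * (real t + 1) / 2) ^ 4"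
        using mult_right_mono[OF h1 Y0] .
      show ?thesis using mult_right_mono[OF h2 ind01(1)] .
    qed
    also have "\<dots> = 4 / dl ^ 2 * Yf (\<lambda>f. 1) 0 t \<omega>"
      unfolding Yf_def by (simp add: algebra_simps)
    finally show ?thesis .
  qed
  have "nn t \<omega> ^ 2 * ((\<Sum>s<t. (if nn s \<omega> \<le> RR then 1 else 0) * ind (Suc s) t \<omega>) + ind 0 t \<omega>)
     = (\<Sum>s<t. nn t \<omega> ^ 2 * ((if nn s \<omega> \<le> RR then 1 else 0) * ind (Suc s) t \<omega>)) + nn t \<omega> ^ 2 * ind 0 t \<omega>"
    by (simp add: sum_distrib_left distrib_left)
  also have "\<dots> \<le> (\<Sum>s<t. (4 / (dl ^ 2 * (real (t - s)) ^ 2)) * Yf (gs s) (Suc s) t \<omega>) + 4 / dl ^ 2 * Yf (\<lambda>f. 1) 0 t \<omega>"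
    using c d by (intro add_mono sum_mono) auto
  finally show ?thesis using a b by linarith
qed

lemma main: "(\<integral>\<^sup>+\<omega>. ennreal (nn t \<omega> ^ 2) \<partial>M) \<le> ennreal CC"
proof -
  have g1m: "(\<lambda>f. 1::real) \<in> borel_measurable (PS 0)" by simp
  have g101: "\<And>f::nat\<Rightarrow>'d. 0 \<le> (1::real)" "\<And>f::nat\<Rightarrow>'d. (1::real) \<le> 1" by auto
  note Ys = Yf_int[OF gs_meas gs01]
  note Y0 = Yf_int[OF g1m g101]
  have nn2_int: "integrable M (\<lambda>\<omega>. nn t \<omega> ^ 2)"
    by (rule nn_int_poly[where t=t and K=1]) (use le_1_pow4[OF norm_ge_zero, of 2] in auto)
  have rhs_int: "integrable M (\<lambda>\<omega>. RR ^ 2 + (\<Sum>s<t. (4 / (dl ^ 2 * (real (t - s)) ^ 2)) * Yf (gs s) (Suc s) t \<omega>)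
      + 4 / dl ^ 2 * Yf (\<lambda>f. 1) 0 t \<omega>)"
    using Ys Y0 by auto
  have "(\<integral>\<omega>. nn t \<omega> ^ 2 \<partial>M) \<le> (\<integral>\<omega>. RR ^ 2 + (\<Sum>s<t. (4 / (dl ^ 2 * (real (t - s)) ^ 2)) * Yf (gs s) (Suc s) t \<omega>)
      + 4 / dl ^ 2 * Yf (\<lambda>f. 1) 0 t \<omega> \<partial>M)"
    by (rule integral_mono[OF nn2_int rhs_int pointwise])
  also have "\<dots> = RR ^ 2 + (\<Sum>s<t. (4 / (dl ^ 2 * (real (t - s)) ^ 2)) * (\<integral>\<omega>. Yf (gs s) (Suc s) t \<omega> \<partial>M))
      + 4 / dl ^ 2 * (\<integral>\<omega>. Yf (\<lambda>f. 1) 0 t \<omega> \<partial>M)"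
    using Ys Y0 by (simp add: prob_space Bochner_Integration.integral_sum integrable_sum)
  also have "\<dots> \<le> RR ^ 2 + (\<Sum>s<t. (4 / (dl ^ 2 * (real (t - s)) ^ 2)) * BB) + 4 / dl ^ 2 * (norm x + dl / 2) ^ 4"
  proof (intro add_mono sum_mono mult_left_mono order_refl)
    fix s assume "s \<in> {..<t}"
    then have "Suc s \<le> t" by simp
    then have "(\<integral>\<omega>. Yf (gs s) (Suc s) t \<omega> \<partial>M) \<le> (\<integral>\<omega>. Yf (gs s) (Suc s) (Suc s) \<omega> \<partial>M)"
      by (rule Yf_bound[OF gs_meas gs01])
    then show "(\<integral>\<omega>. Yf (gs s) (Suc s) t \<omega> \<partial>M) \<le> BB" using Ys_bound[of s] by linarith
  next
    have "(\<integral>\<omega>. Yf (\<lambda>f. 1) 0 t \<omega> \<partial>M) \<le> (\<integral>\<omega>. Yf (\<lambda>f. 1) 0 0 \<omega> \<partial>M)"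
      by (rule Yf_bound[OF g1m g101]) simp
    also have "\<dots> \<le> (\<integral>\<omega>. (norm x + dl / 2) ^ 4 \<partial>M)"
    proof (rule integral_mono[OF Y0])
      fix \<omega>
      have "Yf (\<lambda>f. 1) 0 0 \<omega> = ind 0 0 \<omega> * (norm x + dl / 2) ^ 4" by (simp add: Yf_def)
      also have "\<dots> \<le> 1 * (norm x + dl / 2) ^ 4" using dl_pos by (intro mult_right_mono ind01) auto
      finally show "Yf (\<lambda>f. 1) 0 0 \<omega> \<le> (norm x + dl / 2) ^ 4" by simp
    qed simp
    also have "\<dots> = (norm x + dl / 2) ^ 4" by (simp add: prob_space)
    finally show "(\<integral>\<omega>. Yf (\<lambda>f. 1) 0 t \<omega> \<partial>M) \<le> (norm x + dl / 2) ^ 4" .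
  qed (use dl_pos in auto)
  also have "\<dots> \<le> CC"
  proof -
    have BB0: "BB \<ge> 0" using C4_nonneg r_pos RR_ge(1) by (simp add: BB_def)
    have "(\<Sum>s<t. (4 / (dl ^ 2 * (real (t - s)) ^ 2)) * BB) = (\<Sum>s<t. 4 * BB / dl ^ 2 * (1 / (real (t - s)) ^ 2))"
      by (rule sum.cong) simp_all
    also have "\<dots> = 4 * BB / dl ^ 2 * (\<Sum>s<t. 1 / (real (t - s)) ^ 2)"
      by (simp only: sum_distrib_left)
    also have "\<dots> \<le> 4 * BB / dl ^ 2 * 2"
      using inv_sq_sum[of t] BB0 by (intro mult_left_mono) (auto intro: order_trans)
    finally show ?thesis unfolding CC_def by simp
  qed
  finally have le: "(\<integral>\<omega>. nn t \<omega> ^ 2 \<partial>M) \<le> CC" .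
  have "(\<integral>\<^sup>+\<omega>. ennreal (nn t \<omega> ^ 2) \<partial>M) = ennreal (\<integral>\<omega>. nn t \<omega> ^ 2 \<partial>M)"
    by (rule nn_integral_eq_integral[OF nn2_int]) simp
  also have "\<dots> \<le> ennreal CC" using le by (rule ennreal_leI)
  finally show ?thesis .
qed

end

theorem proposition2:
  fixes M :: "'w measure" and w :: "nat \<Rightarrow> 'w \<Rightarrow> 'd::euclidean_space"
    and C4 r :: real
  assumes "prob_space M"
    and meas: "\<And>t. w t \<in> borel_measurable M"
    and indep: "prob_space.indep_vars M (\<lambda>_. borel) w UNIV"
    and mean0: "\<And>t. integrable M (w t) \<and> integral\<^sup>L M (w t) = 0"
    and C4pos: "C4 > 0"
    and fourth: "\<And>t. integrable M (\<lambda>\<omega>. norm (w t \<omega>) ^ 4) \<and>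
                       integral\<^sup>L M (\<lambda>\<omega>. norm (w t \<omega>) ^ 4) \<le> C4"
    and r: "r > (SUP t. integral\<^sup>L M (\<lambda>\<omega>. norm (w t \<omega>)))"
  shows "\<forall>x::'d. \<exists>c::real. \<forall>t.
           (\<integral>\<^sup>+ \<omega>. ennreal (norm (traj r w x t \<omega>) ^ 2) \<partial>M) \<le> ennreal c"
proof
  fix x :: 'd
  interpret S: setting M w C4 r x
    unfolding setting_def setting_axioms_def using assms by auto
  show "\<exists>c::real. \<forall>t. (\<integral>\<^sup>+ \<omega>. ennreal (norm (traj r w x t \<omega>) ^ 2) \<partial>M) \<le> ennreal c"
    using S.main by blast
qed

end
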